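(* Let $G$ be a dense $G_\delta$ subset of $2^\omega$, and let $T$ be the tree generated by a test. Then there are $\alpha_0\in G$ and a continuous map $f:2^\omega\to G$ such that for each $\alpha\in 2^\omega$: (a) $(\alpha_0,f(\alpha))\in[T]$; (b) for each $t\in\omega^{<\omega}$ and each $m\in\omega$: (i) if $\alpha(p(tm))=1$, then there is $m'\in\omega$ with $(\alpha_0\,\Delta\,f(\alpha))(p(tm')+1)=1$; (ii) if $(\alpha_0\,\Delta\,f(\alpha))(p(tm)+1)=1$, then there is $m'\in\omega$ with $\alpha(p(tm'))=1$.
   Context: Let $\varphi:\omega\to\omega^2$ be the bijection with inverse $\langle n,p\rangle:=\varphi^{-1}(n,p)=\left(\sum_{k\leq n+p}k\right)+p$, and write $\varphi(q)=((q)_0,(q)_1)$. A set $E\subseteq\bigcup_{q}2^q\times 2^q$ is a test if: (a) for each $q$ there is a unique $(s_q,t_q)\in E\cap(2^q\times 2^q)$; (b) for all $m,p\in\omega$ and $u\in 2^{<\omega}$ there is $v\in 2^{<\omega}$ with $(s_p0uv,t_p1uv)\in E$ and $(|t_p1uv|-1)_0=m$; (c) for each $n>0$ there are $q<n$ and $w\in 2^{<\omega}$ with $s_n=s_q0w$, $t_n=t_q1w$. The tree generated by $E$ is $T:=\{(s,t): s=t=\emptyset$ or $\exists q\ \exists w\in 2^{<\omega}\ (s,t)=(s_q0w,t_q1w)\}$, and $[T]$ is the set of $(\alpha,\beta)\in 2^\omega\times2^\omega$ with $(\alpha\upharpoonright r,\beta\upharpoonright r)\in T$ for all $r$. The map $p:\omega^{<\omega}\setminus\{\emptyset\}\to\omega$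 is defined by $p(s):=s(0)$ if $|s|=1$ and $p(s):=\langle p(s\upharpoonright(|s|-1)),s(|s|-1)\rangle$ otherwise; $tm$ denotes the sequence $t$ followed by $m$. $\alpha\,\Delta\,\beta\in 2^\omega$ is the symmetric difference: $(\alpha\,\Delta\,\beta)(k)=1$ iff $\alpha(k)\neq\beta(k)$. *)

theory Defs
  imports "HOL-Analysis.Analysis"
begin

text \<open>Cantor space 2^omega as nat => bool with the product of discrete topologies
  (False = 0, True = 1).\<close>
definition cantor :: "(nat \<Rightarrow> bool) topology" where
  "cantor = product_topology (\<lambda>_. discrete_topology UNIV) UNIV"

definition npair :: "nat \<Rightarrow> nat \<Rightarrow> nat" where
  "npair n p = (\<Sum>k\<le>n+p. k) + p"

definition phi :: "nat \<Rightarrow> nat \<times> nat" where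
  "phi = inv (\<lambda>(n, p). npair n p)"

definition fst_phi :: "nat \<Rightarrow> nat" where
  "fst_phi q = fst (phi q)"

text \<open>Finite binary sequences are bool lists; 0 = False, 1 = True.
  The unique pair of length q in E.\<close>
definition sE :: "(bool list \<times> bool list) set \<Rightarrow> nat \<Rightarrow> bool list" where
  "sE E q = fst (THE st. st \<in> E \<and> length (fst st) = q \<and> length (snd st) = q)"

definition tE :: "(bool list \<times> bool list) set \<Rightarrow> nat \<Rightarrow> bool list" where
  "tE E q = snd (THE st. st \<in> E \<and> length (fst st) = q \<and> length (snd st) = q)"

definition is_test :: "(bool list \<times> bool list) set \<Rightarrow> bool" where
  "is_test E \<longleftrightarrow>
     (\<forall>st\<in>E. length (fst st) = length (snd st)) \<and>
     (\<forall>q. \<exists>!st. st \<in> E \<and> length (fst st) = q \<and> length (snd st) = q) \<and>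
     (\<forall>m p u. \<exists>v. (sE E p @ [False] @ u @ v, tE E p @ [True] @ u @ v) \<in> E \<and>
                   fst_phi (length (tE E p @ [True] @ u @ v) - 1) = m) \<and>
     (\<forall>n>0. \<exists>q<n. \<exists>w. sE E n = sE E q @ [False] @ w \<and> tE E n = tE E q @ [True] @ w)"

definition tree_of :: "(bool list \<times> bool list) set \<Rightarrow> (bool list \<times> bool list) set" where
  "tree_of E = {(s, t). (s = [] \<and> t = []) \<or>
      (\<exists>q w. s = sE E q @ [False] @ w \<and> t = tE E q @ [True] @ w)}"

definition body :: "(bool list \<times> bool list) set \<Rightarrow> ((nat \<Rightarrow> bool) \<times> (nat \<Rightarrow> bool)) set" where
  "body T = {(a, b). \<forall>r. (map a [0..<r], map b [0..<r]) \<in> T}"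

text \<open>p(s) for nonempty s: p([a]) = a, p(s a) = <p(s), a>.\<close>
fun pcode :: "nat list \<Rightarrow> nat" where
  "pcode [] = undefined"
| "pcode (x # xs) = foldl (\<lambda>acc a. npair acc a) x xs"

definition symdiff :: "(nat \<Rightarrow> bool) \<Rightarrow> (nat \<Rightarrow> bool) \<Rightarrow> nat \<Rightarrow> bool" where
  "symdiff a b k = (a k \<noteq> b k)"

end

theory Submission
  imports Defs "HOL-Library.Nat_Bijection"
begin


lemma topspace_cantor[simp]: "topspace cantor = UNIV"
  by (simp add: cantor_def)

lemma box_eq: "Pi\<^sub>E UNIV (\<lambda>k. if k<N then {x k} else UNIV) = {y. \<forall>k<N. y k = (x k::bool)}"
proof (intro set_eqI iffI)
  fix y assume "y \<in> Pi\<^sub>E UNIV (\<lambda>k. if k<N then {x k} else UNIV)"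
  then have h: "\<And>k. y k \<in> (if k<N then {x k} else UNIV)" by (simp add: PiE_iff)
  have "y k = x k" if "k < N" for k using h[of k] that by simp
  then show "y \<in> {y. \<forall>k<N. y k = x k}" by simp
qed (simp add: PiE_iff)

lemma open_box:
  "openin cantor {y. \<forall>k<N. y k = x k}"
proof -
  have "openin cantor (Pi\<^sub>E UNIV (\<lambda>k. if k<N then {x k} else UNIV))"
    unfolding cantor_def openin_product_topology_alt
    apply (intro ballI exI[of _ "\<lambda>k. if k<N then {x k} else UNIV"] conjI)
    apply (rule finite_subset[of _ "{..<N}"]) apply auto done
  then show ?thesis by (simp only: box_eq)
qed

lemma open_nbhd:
  assumes "openin cantor U" "x \<in> U"
  shows "\<exists>N. \<forall>y. (\<forall>k<N. y k = x k) \<longrightarrow> y \<in> U"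
proof -
  have "\<exists>V. finite {i \<in> UNIV. V i \<noteq> topspace (discrete_topology UNIV)} \<and>
        (\<forall>i\<in>UNIV. openin (discrete_topology UNIV) (V i)) \<and> x \<in> Pi\<^sub>E UNIV V \<and> Pi\<^sub>E UNIV V \<subseteq> U"
    using assms unfolding cantor_def openin_product_topology_alt by blast
  then obtain V where V: "finite {i. V i \<noteq> UNIV}" "x \<in> Pi\<^sub>E UNIV V" "Pi\<^sub>E UNIV V \<subseteq> U"
    by auto
  define N where "N = Suc (Max (insert 0 {i. V i \<noteq> UNIV}))"
  have lt: "i < N" if "V i \<noteq> UNIV" for i using V(1) that unfolding N_def
    by (simp add: le_imp_less_Suc)
  have "y \<in> Pi\<^sub>E UNIV V" if "\<forall>k<N. y k = x k" for y
  proof -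
    have "y i \<in> V i" for i
    proof (cases "V i = UNIV")
      case False then have "i < N" using lt by blast
      then have "y i = x i" using that by simp
      moreover have "x i \<in> V i" using V(2) by (simp add: PiE_iff)
      ultimately show ?thesis by simp
    qed simp
    then show ?thesis by (simp add: PiE_iff)
  qed
  then have "\<forall>y. (\<forall>k<N. y k = x k) \<longrightarrow> y \<in> U" using V(3) by (meson subsetD)
  then show ?thesis by (rule exI)
qed

lemma locconst_cont:
  fixes g :: "(nat \<Rightarrow> bool) \<Rightarrow> 'b"
  assumes "\<And>a b. (\<forall>k<N. a k = b k) \<Longrightarrow> g a = g b"
  shows "continuous_map cantor (discrete_topology UNIV) g"
  unfolding continuous_map_def
proof (intro conjI allI impI)
  fix S :: "'b set"
  show "openin cantor {x \<in> topspace cantor. g x \<in> S}"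
  proof (subst openin_subopen, intro ballI)
    fix x assume x: "x \<in> {x \<in> topspace cantor. g x \<in> S}"
    have sub: "{y. \<forall>k<N. y k = x k} \<subseteq> {x \<in> topspace cantor. g x \<in> S}"
    proof
      fix y assume "y \<in> {y. \<forall>k<N. y k = x k}"
      then have "g y = g x" using assms[of y x] by simp
      then show "y \<in> {x \<in> topspace cantor. g x \<in> S}" using x by simp
    qed
    show "\<exists>T. openin cantor T \<and> x \<in> T \<and> T \<subseteq> {x \<in> topspace cantor. g x \<in> S}"
    proof (intro exI conjI)
      show "openin cantor {y. \<forall>k<N. y k = x k}" by (rule open_box)
      show "x \<in> {y. \<forall>k<N. y k = x k}" by simp
      show "{y. \<forall>k<N. y k = x k} \<subseteq> {x \<in> topspace cantor. g x \<in> S}" by (rule sub)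
    qed
  qed
qed simp

definition cyl :: "bool list \<Rightarrow> (nat \<Rightarrow> bool) set" where
  "cyl r = {y. \<forall>i<length r. y i = r!i}"

lemma cyl_open: "openin cantor (cyl r)"
proof -
  have "cyl r = {y. \<forall>k<length r. y k = (\<lambda>i. r!i) k}" by (simp add: cyl_def)
  then show ?thesis by (simp only: open_box)
qed

lemma cyl_app: "cyl (r @ u) \<subseteq> cyl r"
  unfolding cyl_def by (auto simp: nth_append)

lemma gdelta_seq:
  assumes "gdelta_in cantor G"
  obtains U :: "nat \<Rightarrow> (nat \<Rightarrow> bool) set" where "\<And>j. openin cantor (U j)" "\<And>j. G \<subseteq> U j" "(\<Inter>j. U j) \<subseteq> G"
proof -
  obtain C where C: "countable C" "\<And>V. V \<in> C \<Longrightarrow> openin cantor V" "\<Inter>C = G"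
    using assms unfolding gdelta_in_alt intersection_of_def by auto
  show ?thesis
  proof (cases "C = {}")
    case True
    show ?thesis by (rule that[of "\<lambda>_. UNIV"]) (use True C openin_topspace[of cantor] in auto)
  next
    case False
    show ?thesis
    proof (rule that[of "from_nat_into C"])
      show "openin cantor (from_nat_into C j)" for j using C(2) from_nat_into[OF False] by blast
      show "G \<subseteq> from_nat_into C j" for j using C(3) from_nat_into[OF False] by blast
      have "range (from_nat_into C) = C" using range_from_nat_into[OF False C(1)] .
      then show "(\<Inter>j. from_nat_into C j) \<subseteq> G" using C(3) by simp
    qed
  qed
qed

lemma dense_cyl:
  assumes "cantor closure_of G = topspace cantor"
  shows "\<exists>x\<in>G. x \<in> cyl r"
proof -
  define e where "e = (\<lambda>i. if i < length r then r!i else False)"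
  have "e \<in> cyl r" by (simp add: e_def cyl_def)
  moreover have "e \<in> cantor closure_of G" using assms by simp
  ultimately show ?thesis using cyl_open[of r] unfolding in_closure_of by blast
qed

lemma ext_into:
  assumes "cantor closure_of G = topspace cantor" "openin cantor V" "G \<subseteq> V"
  shows "\<exists>u. cyl (r @ u) \<subseteq> V"
proof -
  obtain x where x: "x \<in> G" "x \<in> cyl r" using dense_cyl[OF assms(1)] by blast
  obtain N where N: "\<And>y. (\<forall>k<N. y k = x k) \<Longrightarrow> y \<in> V"
    using open_nbhd[OF assms(2), of x] x assms(3) by blast
  define u where "u = map x [length r..<max N (length r)]"
  have "y \<in> V" if y: "y \<in> cyl (r @ u)" for y
  proof (rule N, intro allI impI)
    fix k assume k: "k < N"
    have len: "length (r @ u) = max N (length r)" by (simp add: u_def)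
    show "y k = x k"
    proof (cases "k < length r")
      case True
      then have "y k = r!k" using y unfolding cyl_def by (auto simp: nth_append)
      also have "\<dots> = x k" using x(2) True unfolding cyl_def by simp
      finally show ?thesis .
    next
      case False
      have "k < length (r@u)" using len k by simp
      then have "y k = (r@u)!k" using y unfolding cyl_def by blast
      also have "\<dots> = u!(k - length r)" using False by (simp add: nth_append)
      also have "\<dots> = x k" using False k unfolding u_def by simp
      finally show ?thesis .
    qed
  qed
  then show ?thesis by blast
qed

lemma ext_into_finite:
  assumes "cantor closure_of G = topspace cantor" "openin cantor V" "G \<subseteq> V" "finite S"
  shows "\<exists>u. \<forall>r\<in>S. cyl (r @ u) \<subseteq> V"
  using assms(4)
proof (induction S rule: finite_induct)
  case empty then show ?case by simp
next
  case (insert r S)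
  then obtain u where u: "\<forall>r\<in>S. cyl (r @ u) \<subseteq> V" by blast
  obtain u' where u': "cyl ((r @ u) @ u') \<subseteq> V" using ext_into[OF assms(1-3)] by blast
  have "\<forall>r'\<in>insert r S. cyl (r' @ u @ u') \<subseteq> V"
  proof
    fix r' assume "r' \<in> insert r S"
    then show "cyl (r' @ u @ u') \<subseteq> V"
    proof
      assume "r' = r" then show ?thesis using u' by simp
    next
      assume "r' \<in> S"
      then have "cyl (r' @ u) \<subseteq> V" using u by blast
      moreover have "cyl ((r' @ u) @ u') \<subseteq> cyl (r' @ u)" by (rule cyl_app)
      ultimately show ?thesis by simp
    qed
  qed
  then show ?case by blast
qed



lemma test_E:
  assumes "is_test E"
  shows "(sE E q, tE E q) \<in> E \<and> length (sE E q) = q \<and> length (tE E q) = q"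
proof -
  have ex: "\<exists>!st. st \<in> E \<and> length (fst st) = q \<and> length (snd st) = q"
    using assms unfolding is_test_def by blast
  have "(THE st. st \<in> E \<and> length (fst st) = q \<and> length (snd st) = q) \<in> E \<and>
     length (fst (THE st. st \<in> E \<and> length (fst st) = q \<and> length (snd st) = q)) = q \<and>
     length (snd (THE st. st \<in> E \<and> length (fst st) = q \<and> length (snd st) = q)) = q"
    using theI'[OF ex] .
  then show ?thesis unfolding sE_def tE_def by simp
qed

lemma test_uniq:
  assumes "is_test E" "(a, b) \<in> E" "length a = q" "length b = q"
  shows "sE E q = a \<and> tE E q = b"
proof -
  have ex: "\<exists>!st. st \<in> E \<and> length (fst st) = q \<and> length (snd st) = q"
    using assms unfolding is_test_def by blast
  have "(THE st. st \<in> E \<and> length (fst st) = q \<and> length (snd st) = q) = (a, b)"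
    using assms(2-4) by (intro the1_equality[OF ex]) simp
  then show ?thesis unfolding sE_def tE_def by simp
qed

lemma npair_eq: "npair n p = prod_encode (p, n)"
proof -
  have "(\<Sum>k\<le>n+p. k) = \<Sum>{0..n+p}" by (simp add: atLeast0AtMost)
  also have "\<dots> = triangle (n+p)" by (simp add: gauss_sum_nat triangle_def)
  finally show ?thesis by (simp add: npair_def prod_encode_def add.commute)
qed

lemma bij_npair: "bij (\<lambda>(n, p). npair n p)"
proof -
  have "(\<lambda>(n, p). npair n p) = prod_encode \<circ> prod.swap" by (auto simp: npair_eq)
  moreover have "bij (prod.swap :: nat \<times> nat \<Rightarrow> _)" by (simp add: bij_def)
  ultimately show ?thesis using bij_prod_encode bij_comp by metis
qed

lemma phi_npair: "phi (npair a b) = (a, b)"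
proof -
  have "inj (\<lambda>(n, p). npair n p)" using bij_npair bij_is_inj by blast
  then have "inv (\<lambda>(n, p). npair n p) ((\<lambda>(n, p). npair n p) (a, b)) = (a, b)"
    by (rule inv_f_f)
  then show ?thesis unfolding phi_def by simp
qed

lemma npair_phi: "npair (fst (phi x)) (snd (phi x)) = x"
proof -
  have "surj (\<lambda>(n, p). npair n p)" using bij_npair bij_is_surj by blast
  then have "(\<lambda>(n, p). npair n p) (inv (\<lambda>(n, p). npair n p) x) = x"
    by (rule surj_f_inv_f)
  then show ?thesis unfolding phi_def by (simp add: case_prod_beta)
qed

lemma fst_phi_npair: "fst_phi (npair a b) = a"
  by (simp add: fst_phi_def phi_npair)

lemma pcode_snoc: "pcode (t @ [m]) = (if t = [] then m else npair (pcode t) m)"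
  by (cases t) auto

fun enum :: "nat \<Rightarrow> bool list" where
  "enum 0 = []"
| "enum (Suc j) = enum (j div 2) @ [odd j]"

lemma enum_mono: "j \<le> k \<Longrightarrow> length (enum j) \<le> length (enum k)"
proof (induction k arbitrary: j rule: less_induct)
  case (less k)
  show ?case
  proof (cases j)
    case 0 then show ?thesis by simp
  next
    case (Suc j')
    then obtain k' where k: "k = Suc k'" using less.prems by (cases k) auto
    have "j' div 2 \<le> k' div 2" using less.prems Suc k by (simp add: div_le_mono)
    moreover have "k' div 2 < k" using k by simp
    ultimately have "length (enum (j' div 2)) \<le> length (enum (k' div 2))" using less.IH by blast
    then show ?thesis using Suc k by simp
  qed
qed

lemma enum_surj: "\<exists>j. enum j = \<tau>"
proof (induction \<tau> rule: rev_induct)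
  case Nil then show ?case by (rule exI[of _ 0]) simp
next
  case (snoc b \<tau>)
  then obtain j where j: "enum j = \<tau>" by blast
  define k where "k = 2 * j + (if b then 1 else 0)"
  have "k div 2 = j" "odd k = b" by (auto simp: k_def)
  then have "enum (Suc k) = \<tau> @ [b]" using j by simp
  then show ?case by blast
qed



definition flip :: "bool list \<Rightarrow> nat set \<Rightarrow> bool list" where
  "flip \<sigma> Q = map (\<lambda>i. \<sigma>!i \<noteq> (i \<in> Q)) [0..<length \<sigma>]"

definition Qa :: "(bool list \<times> nat) list \<Rightarrow> (nat \<Rightarrow> bool) \<Rightarrow> nat set" where
  "Qa evs \<alpha> = insert 0 {q. \<exists>\<tau>. (\<tau>, q) \<in> set evs \<and> (\<forall>i<length \<tau>. \<alpha> i = \<tau>!i)}"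

definition extb :: "bool list \<Rightarrow> nat \<Rightarrow> bool" where
  "extb \<tau> = (\<lambda>i. if i < length \<tau> then \<tau>!i else False)"

definition endsT :: "bool list \<Rightarrow> bool" where
  "endsT \<tau> \<longleftrightarrow> \<tau> \<noteq> [] \<and> last \<tau>"

lemma length_flip[simp]: "length (flip \<sigma> Q) = length \<sigma>"
  by (simp add: flip_def)

lemma nth_flip[simp]: "i < length \<sigma> \<Longrightarrow> flip \<sigma> Q ! i = (\<sigma>!i \<noteq> (i \<in> Q))"
  by (simp add: flip_def)

lemma finite_Qa: "finite (Qa evs \<alpha>)"
proof -
  have "{q. \<exists>\<tau>. (\<tau>, q) \<in> set evs \<and> (\<forall>i<length \<tau>. \<alpha> i = \<tau>!i)} \<subseteq> snd ` set evs"
    by force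
  then show ?thesis unfolding Qa_def by (meson finite_SigmaI finite_imageI finite_insert finite_set finite_subset)
qed

lemma Qa_ext:
  assumes "\<forall>(\<tau>', q)\<in>set evs. length \<tau>' \<le> length \<tau>" "\<forall>i<length \<tau>. \<alpha> i = \<tau>!i"
  shows "Qa evs \<alpha> = Qa evs (extb \<tau>)"
proof -
  have "(\<forall>i<length \<tau>'. \<alpha> i = \<tau>'!i) \<longleftrightarrow> (\<forall>i<length \<tau>'. extb \<tau> i = \<tau>'!i)"
    if "(\<tau>', q) \<in> set evs" for \<tau>' q
  proof -
    have "length \<tau>' \<le> length \<tau>" using assms(1) that by blast
    then show ?thesis using assms(2) by (auto simp: extb_def)
  qed
  then show ?thesis unfolding Qa_def by blast
qed

locale constr =
  fixes E :: "(bool list \<times> bool list) set" and U :: "nat \<Rightarrow> (nat \<Rightarrow> bool) set"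
    and G :: "(nat \<Rightarrow> bool) set"
  assumes test: "is_test E"
    and opn: "\<And>j. openin cantor (U j)" and GU: "\<And>j. G \<subseteq> U j"
    and dense: "cantor closure_of G = topspace cantor"
begin

definition uext :: "nat \<Rightarrow> bool list \<Rightarrow> bool list" where
  "uext j \<sigma> = (SOME u. u \<noteq> [] \<and> (\<forall>Q. Q \<subseteq> {..<length \<sigma>} \<longrightarrow> cyl (flip \<sigma> Q @ u) \<subseteq> U j))"

lemma uext: "uext j \<sigma> \<noteq> [] \<and> (\<forall>Q. Q \<subseteq> {..<length \<sigma>} \<longrightarrow> cyl (flip \<sigma> Q @ uext j \<sigma>) \<subseteq> U j)"
proof -
  have "finite (flip \<sigma> ` Pow {..<length \<sigma>})" by simp
  then obtain u where u: "\<forall>r\<in>flip \<sigma> ` Pow {..<length \<sigma>}. cyl (r @ u) \<subseteq> U j"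
    using ext_into_finite[OF dense opn GU] by blast
  have "u @ [False] \<noteq> [] \<and> (\<forall>Q. Q \<subseteq> {..<length \<sigma>} \<longrightarrow> cyl (flip \<sigma> Q @ u @ [False]) \<subseteq> U j)"
  proof (intro conjI allI impI)
    fix Q assume "Q \<subseteq> {..<length \<sigma>}"
    then have "cyl (flip \<sigma> Q @ u) \<subseteq> U j" using u by blast
    moreover have "cyl ((flip \<sigma> Q @ u) @ [False]) \<subseteq> cyl (flip \<sigma> Q @ u)" by (rule cyl_app)
    ultimately show "cyl (flip \<sigma> Q @ u @ [False]) \<subseteq> U j" by simp
  qed simp
  then show ?thesis unfolding uext_def by (rule someI)
qed

definition vch :: "nat \<Rightarrow> bool list \<Rightarrow> bool list \<Rightarrow> bool list" where
  "vch n \<sigma> \<rho> = (SOME v. (\<sigma> @ v, \<rho> @ v) \<in> E \<and> fst_phi (length (\<rho> @ v) - 1) = n)"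

definition step :: "nat \<Rightarrow> bool list \<times> (bool list \<times> nat) list \<Rightarrow> bool list \<times> (bool list \<times> nat) list" where
  "step j st = (let \<sigma>' = fst st @ uext j (fst st); \<tau> = enum j in
     if endsT \<tau> then
       (let \<rho> = flip \<sigma>' (Qa (snd st) (extb \<tau>));
            v = vch (fst_phi (length \<tau> - 1)) \<sigma>' \<rho>
        in (\<sigma>' @ v @ [False], snd st @ [(\<tau>, length \<sigma>' + length v)]))
     else (\<sigma>', snd st))"

primrec st :: "nat \<Rightarrow> bool list \<times> (bool list \<times> nat) list" where
  "st 0 = ([False], [])"
| "st (Suc j) = step j (st j)"

definition sig where "sig j = fst (st j)"
definition evs where "evs j = snd (st j)"
definition sp where "sp j = sig j @ uext j (sig j)"
definition rh where "rh j = flip (sp j) (Qa (evs j) (extb (enum j)))"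
definition vv where "vv j = vch (fst_phi (length (enum j) - 1)) (sp j) (rh j)"

lemma st_Suc_T:
  assumes "endsT (enum j)"
  shows "sig (Suc j) = sp j @ vv j @ [False]"
    "evs (Suc j) = evs j @ [(enum j, length (sp j) + length (vv j))]"
  using assms by (simp_all add: sig_def evs_def sp_def rh_def vv_def step_def Let_def)

lemma st_Suc_F:
  assumes "\<not> endsT (enum j)"
  shows "sig (Suc j) = sp j" "evs (Suc j) = evs j"
  using assms by (simp_all add: sig_def evs_def sp_def step_def Let_def)

lemma sig0: "sig 0 = [False]" and evs0: "evs 0 = []"
  by (simp_all add: sig_def evs_def)


lemma take_map_nth: "p \<le> length xs \<Longrightarrow> take p xs = map (nth xs) [0..<p]"
  by (rule nth_equalityI) auto

lemma split_at: "p < length xs \<Longrightarrow> xs = map (nth xs) [0..<p] @ [xs!p] @ drop (Suc p) xs"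
  by (metis append_Cons append_Nil id_take_nth_drop less_imp_le take_map_nth)

definition Inv where
  "Inv j \<longleftrightarrow> j < length (sig j) \<and>
    (\<forall>(\<tau>, q)\<in>set (evs j). 0 < q \<and> q < length (sig j) \<and> endsT \<tau> \<and>
        fst_phi (q - 1) = fst_phi (length \<tau> - 1) \<and> (\<exists>l<j. \<tau> = enum l)) \<and>
    (\<forall>\<alpha>. \<forall>q\<in>Qa (evs j) \<alpha>. map (\<lambda>i. sig j ! i) [0..<q] = sE E q \<and>
        map (\<lambda>i. sig j ! i \<noteq> (i \<in> Qa (evs j) \<alpha>)) [0..<q] = tE E q \<and> sig j ! q = False)"

lemma Inv0: "Inv 0"
proof -
  have "sE E 0 = []" "tE E 0 = []" using test_E[OF test, of 0] by auto
  then show ?thesis unfolding Inv_def by (simp add: sig0 evs0 Qa_def)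
qed

lemma Qa_bound:
  assumes "Inv j"
  shows "Qa (evs j) \<alpha> \<subseteq> {..<length (sig j)}"
  using assms unfolding Inv_def Qa_def by auto

lemma vch_spec:
  assumes "Inv j" "endsT (enum j)"
  shows "(sp j @ vv j, rh j @ vv j) \<in> E \<and>
         fst_phi (length (rh j @ vv j) - 1) = fst_phi (length (enum j) - 1)"
proof -
  define \<sigma> where "\<sigma> = sig j"
  define Q where "Q = Qa (evs j) (extb (enum j))"
  define p where "p = Max Q"
  define n where "n = fst_phi (length (enum j) - 1)"
  have pQ: "p \<in> Q" unfolding p_def Q_def by (rule Max_in[OF finite_Qa]) (simp add: Qa_def)
  have le: "i \<le> p" if "i \<in> Q" for i unfolding p_def using that Max_ge[OF finite_Qa] unfolding Q_def by blast
  have pl: "p < length \<sigma>" using Qa_bound[OF assms(1)] pQ unfolding Q_def \<sigma>_def by blast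
  have I3: "map (\<lambda>i. \<sigma> ! i) [0..<p] = sE E p" "map (\<lambda>i. \<sigma> ! i \<noteq> (i \<in> Q)) [0..<p] = tE E p"
     "\<sigma> ! p = False"
    using assms(1) pQ unfolding Inv_def Q_def \<sigma>_def by blast+
  define w where "w = drop (Suc p) (sp j)"
  have spl: "length \<sigma> < length (sp j)" using uext unfolding sp_def \<sigma>_def by simp
  have spi: "sp j ! i = \<sigma> ! i" if "i < length \<sigma>" for i
    using that unfolding sp_def \<sigma>_def by (simp add: nth_append)
  have e1: "sp j = sE E p @ [False] @ w"
  proof -
    have "sp j = map (nth (sp j)) [0..<p] @ [sp j ! p] @ drop (Suc p) (sp j)"
      using split_at[of p "sp j"] pl spl by simp
    moreover have "map (nth (sp j)) [0..<p] = map (\<lambda>i. \<sigma> ! i) [0..<p]"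
      using spi pl by simp
    ultimately show ?thesis using I3 spi pl unfolding w_def by simp
  qed
  have rhi: "rh j ! i = (sp j ! i \<noteq> (i \<in> Q))" if "i < length (sp j)" for i
    using that unfolding rh_def Q_def by simp
  have e2: "rh j = tE E p @ [True] @ w"
  proof -
    have lr: "length (rh j) = length (sp j)" by (simp add: rh_def)
    have "rh j = map (nth (rh j)) [0..<p] @ [rh j ! p] @ drop (Suc p) (rh j)"
      using split_at[of p "rh j"] pl spl lr by simp
    moreover have "map (nth (rh j)) [0..<p] = map (\<lambda>i. \<sigma> ! i \<noteq> (i \<in> Q)) [0..<p]"
      using rhi spi pl spl by simp
    moreover have "rh j ! p = True" using rhi spi pl spl pQ I3(3) by simp
    moreover have "drop (Suc p) (rh j) = w"
    proof (rule nth_equalityI)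
      show "length (drop (Suc p) (rh j)) = length w" using lr by (simp add: w_def)
      fix i assume "i < length (drop (Suc p) (rh j))"
      then have i: "Suc p + i < length (sp j)" using lr by simp
      have "Suc p + i \<notin> Q" using le by fastforce
      then show "drop (Suc p) (rh j) ! i = w ! i" using rhi[OF i] lr i by (simp add: w_def)
    qed
    ultimately show ?thesis using I3 by simp
  qed
  obtain v where v: "(sE E p @ [False] @ w @ v, tE E p @ [True] @ w @ v) \<in> E"
     "fst_phi (length (tE E p @ [True] @ w @ v) - 1) = n"
    using test unfolding is_test_def by blast
  then have "(sp j @ v, rh j @ v) \<in> E \<and> fst_phi (length (rh j @ v) - 1) = n"
    using e1 e2 by simp
  then have "(sp j @ vv j, rh j @ vv j) \<in> E \<and> fst_phi (length (rh j @ vv j) - 1) = n"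
    unfolding vv_def vch_def n_def[symmetric] by (rule someI)
  then show ?thesis unfolding n_def .
qed


lemma Qa_snoc: "Qa (ev @ [(\<tau>, q)]) \<alpha> =
   (if \<forall>i<length \<tau>. \<alpha> i = \<tau>!i then insert q (Qa ev \<alpha>) else Qa ev \<alpha>)"
  unfolding Qa_def by auto

lemma sp_len: "length (sig j) < length (sp j)"
  using uext unfolding sp_def by simp

lemma sp_nth: "i < length (sig j) \<Longrightarrow> sp j ! i = sig j ! i"
  unfolding sp_def by (simp add: nth_append)

lemma Inv_Suc:
  assumes inv: "Inv j"
  shows "Inv (Suc j)"
proof (cases "endsT (enum j)")
  case False
  note e = st_Suc_F[OF False]
  have I1: "Suc j < length (sig (Suc j))" using inv sp_len[of j] e unfolding Inv_def by simp
  have I2: "\<forall>(\<tau>, q)\<in>set (evs (Suc j)). 0 < q \<and> q < length (sig (Suc j)) \<and> endsT \<tau> \<and>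
        fst_phi (q - 1) = fst_phi (length \<tau> - 1) \<and> (\<exists>l<Suc j. \<tau> = enum l)"
    using inv sp_len[of j] e unfolding Inv_def by (fastforce simp: less_Suc_eq)
  have I3: "\<forall>\<alpha>. \<forall>q\<in>Qa (evs (Suc j)) \<alpha>. map (\<lambda>i. sig (Suc j) ! i) [0..<q] = sE E q \<and>
        map (\<lambda>i. sig (Suc j) ! i \<noteq> (i \<in> Qa (evs (Suc j)) \<alpha>)) [0..<q] = tE E q \<and> sig (Suc j) ! q = False"
  proof (intro allI ballI)
    fix \<alpha> q assume q: "q \<in> Qa (evs (Suc j)) \<alpha>"
    then have q': "q \<in> Qa (evs j) \<alpha>" using e by simp
    have ql: "q < length (sig j)" using Qa_bound[OF inv] q' by blast
    have a: "map (\<lambda>i. sig (Suc j) ! i) [0..<q] = map (\<lambda>i. sig j ! i) [0..<q]"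
      using e ql sp_nth by simp
    have b: "map (\<lambda>i. sig (Suc j) ! i \<noteq> (i \<in> Qa (evs (Suc j)) \<alpha>)) [0..<q] =
                   map (\<lambda>i. sig j ! i \<noteq> (i \<in> Qa (evs j) \<alpha>)) [0..<q]"
      using e ql sp_nth by simp
    have c: "sig (Suc j) ! q = sig j ! q" using e ql sp_nth by simp
    have old: "map (\<lambda>i. sig j ! i) [0..<q] = sE E q"
       "map (\<lambda>i. sig j ! i \<noteq> (i \<in> Qa (evs j) \<alpha>)) [0..<q] = tE E q" "sig j ! q = False"
      using inv q' unfolding Inv_def by blast+
    show "map (\<lambda>i. sig (Suc j) ! i) [0..<q] = sE E q \<and>
        map (\<lambda>i. sig (Suc j) ! i \<noteq> (i \<in> Qa (evs (Suc j)) \<alpha>)) [0..<q] = tE E q \<and> sig (Suc j) ! q = False"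
      by (simp only: a b c old)
  qed
  show ?thesis unfolding Inv_def using I1 I2 I3 by blast
next
  case True
  note e = st_Suc_T[OF True]
  define qn where "qn = length (sp j) + length (vv j)"
  have vs: "(sp j @ vv j, rh j @ vv j) \<in> E" "fst_phi (length (rh j @ vv j) - 1) = fst_phi (length (enum j) - 1)"
    using vch_spec[OF inv True] by auto
  have lrh: "length (rh j) = length (sp j)" by (simp add: rh_def)
  have sEq: "sE E qn = sp j @ vv j" and tEq: "tE E qn = rh j @ vv j"
    using test_uniq[OF test vs(1)] lrh unfolding qn_def by auto
  have sl: "length (sig (Suc j)) = Suc qn" using e unfolding qn_def by simp
  have I1: "Suc j < length (sig (Suc j))" using inv sp_len[of j] sl unfolding Inv_def qn_def by simp
  have I2: "\<forall>(\<tau>, q)\<in>set (evs (Suc j)). 0 < q \<and> q < length (sig (Suc j)) \<and> endsT \<tau> \<and>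
        fst_phi (q - 1) = fst_phi (length \<tau> - 1) \<and> (\<exists>l<Suc j. \<tau> = enum l)"
  proof
    fix x assume "x \<in> set (evs (Suc j))"
    then have "x \<in> set (evs j) \<or> x = (enum j, qn)" using e unfolding qn_def by auto
    then show "case x of (\<tau>, q) \<Rightarrow> 0 < q \<and> q < length (sig (Suc j)) \<and> endsT \<tau> \<and>
        fst_phi (q - 1) = fst_phi (length \<tau> - 1) \<and> (\<exists>l<Suc j. \<tau> = enum l)"
    proof
      assume "x \<in> set (evs j)"
      then show ?thesis using inv sl sp_len[of j] unfolding Inv_def qn_def by (fastforce simp: less_Suc_eq)
    next
      assume x: "x = (enum j, qn)"
      have "0 < qn" using sp_len[of j] unfolding qn_def by (auto dest: gr0I)
      moreover have "fst_phi (qn - 1) = fst_phi (length (enum j) - 1)" using vs(2) lrh unfolding qn_def by simp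
      ultimately show ?thesis using x sl True by auto
    qed
  qed
  have I3: "\<forall>\<alpha>. \<forall>q\<in>Qa (evs (Suc j)) \<alpha>. map (\<lambda>i. sig (Suc j) ! i) [0..<q] = sE E q \<and>
        map (\<lambda>i. sig (Suc j) ! i \<noteq> (i \<in> Qa (evs (Suc j)) \<alpha>)) [0..<q] = tE E q \<and> sig (Suc j) ! q = False"
  proof (intro allI ballI)
    fix \<alpha> q assume q: "q \<in> Qa (evs (Suc j)) \<alpha>"
    define P where "P = (\<forall>i<length (enum j). \<alpha> i = enum j ! i)"
    have Qs: "Qa (evs (Suc j)) \<alpha> = (if P then insert qn (Qa (evs j) \<alpha>) else Qa (evs j) \<alpha>)"
      using e Qa_snoc unfolding qn_def P_def by simp
    have bound: "Qa (evs j) \<alpha> \<subseteq> {..<length (sig j)}" using Qa_bound[OF inv] .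
    have qnl: "length (sig j) < qn" using sp_len[of j] unfolding qn_def by simp
    have sSi: "sig (Suc j) ! i = sp j ! i" if "i < length (sp j)" for i
      using e that by (simp add: nth_append)
    show "map (\<lambda>i. sig (Suc j) ! i) [0..<q] = sE E q \<and>
        map (\<lambda>i. sig (Suc j) ! i \<noteq> (i \<in> Qa (evs (Suc j)) \<alpha>)) [0..<q] = tE E q \<and> sig (Suc j) ! q = False"
    proof (cases "q \<in> Qa (evs j) \<alpha>")
      case q': True
      have ql: "q < length (sig j)" using bound q' by blast
      have a: "map (\<lambda>i. sig (Suc j) ! i) [0..<q] = map (\<lambda>i. sig j ! i) [0..<q]"
        using sSi sp_nth ql sp_len[of j] by simp
      have b: "map (\<lambda>i. sig (Suc j) ! i \<noteq> (i \<in> Qa (evs (Suc j)) \<alpha>)) [0..<q] =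
                     map (\<lambda>i. sig j ! i \<noteq> (i \<in> Qa (evs j) \<alpha>)) [0..<q]"
        using sSi sp_nth ql sp_len[of j] qnl Qs by auto
      have c: "sig (Suc j) ! q = sig j ! q" using sSi sp_nth ql sp_len[of j] by simp
      have old: "map (\<lambda>i. sig j ! i) [0..<q] = sE E q"
         "map (\<lambda>i. sig j ! i \<noteq> (i \<in> Qa (evs j) \<alpha>)) [0..<q] = tE E q" "sig j ! q = False"
        using inv q' unfolding Inv_def by blast+
      show ?thesis by (simp only: a b c old)
    next
      case q': False
      then have P: "P" and qq: "q = qn" using q Qs by (auto split: if_splits)
      have lens: "\<forall>(\<tau>', q)\<in>set (evs j). length \<tau>' \<le> length (enum j)"
        using inv enum_mono unfolding Inv_def by fastforce
      have QQ: "Qa (evs j) \<alpha> = Qa (evs j) (extb (enum j))"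
        by (rule Qa_ext[OF lens]) (use P P_def in simp)
      have m1: "map (\<lambda>i. sig (Suc j) ! i) [0..<qn] = sp j @ vv j"
        by (rule nth_equalityI) (auto simp: e qn_def nth_append)
      have m2: "map (\<lambda>i. sig (Suc j) ! i \<noteq> (i \<in> Qa (evs (Suc j)) \<alpha>)) [0..<qn] = rh j @ vv j"
      proof (rule nth_equalityI)
        show "length (map (\<lambda>i. sig (Suc j) ! i \<noteq> (i \<in> Qa (evs (Suc j)) \<alpha>)) [0..<qn]) = length (rh j @ vv j)"
          using lrh unfolding qn_def by simp
        fix i assume "i < length (map (\<lambda>i. sig (Suc j) ! i \<noteq> (i \<in> Qa (evs (Suc j)) \<alpha>)) [0..<qn])"
        then have i: "i < qn" by simp
        have mem: "(i \<in> Qa (evs (Suc j)) \<alpha>) = (i \<in> Qa (evs j) \<alpha>)" using Qs P i by auto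
        show "map (\<lambda>i. sig (Suc j) ! i \<noteq> (i \<in> Qa (evs (Suc j)) \<alpha>)) [0..<qn] ! i = (rh j @ vv j) ! i"
        proof (cases "i < length (sp j)")
          case True
          then show ?thesis using i mem QQ lrh sSi unfolding rh_def by (simp add: nth_append)
        next
          case False
          then have "i \<notin> Qa (evs j) \<alpha>" using bound sp_len[of j] by auto
          then show ?thesis using i mem False lrh e unfolding qn_def by (simp add: nth_append less_diff_conv2)
        qed
      qed
      have m3: "sig (Suc j) ! qn = False" using e unfolding qn_def by (simp add: nth_append)
      show ?thesis using m1 m2 m3 sEq tEq qq by simp
    qed
  qed
  show ?thesis unfolding Inv_def using I1 I2 I3 by blast
qed

lemma Inv_all: "Inv j"
  by (induction j) (auto intro: Inv0 Inv_Suc)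


lemma I1: "j < length (sig j)" using Inv_all[of j] unfolding Inv_def by blast
lemma I2: "(\<tau>, q) \<in> set (evs j) \<Longrightarrow> 0 < q \<and> q < length (sig j) \<and> endsT \<tau> \<and>
        fst_phi (q - 1) = fst_phi (length \<tau> - 1) \<and> (\<exists>l<j. \<tau> = enum l)"
  using Inv_all[of j] unfolding Inv_def by blast
lemma I3: "q \<in> Qa (evs j) \<alpha> \<Longrightarrow> map (\<lambda>i. sig j ! i) [0..<q] = sE E q \<and>
        map (\<lambda>i. sig j ! i \<noteq> (i \<in> Qa (evs j) \<alpha>)) [0..<q] = tE E q \<and> sig j ! q = False"
  using Inv_all[of j] unfolding Inv_def by blast

lemma sig_Suc_ex: "\<exists>w. sig (Suc j) = sp j @ w"
  by (cases "endsT (enum j)") (auto simp: st_Suc_T st_Suc_F)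

lemma sig_pre: "j \<le> k \<Longrightarrow> \<exists>ys. sig k = sig j @ ys"
proof (induction k rule: dec_induct)
  case base then show ?case by simp
next
  case (step k)
  then obtain ys where "sig k = sig j @ ys" by blast
  moreover obtain w where "sig (Suc k) = sp k @ w" using sig_Suc_ex by blast
  ultimately show ?case unfolding sp_def by auto
qed

lemma sig_nth: "j \<le> k \<Longrightarrow> i < length (sig j) \<Longrightarrow> sig k ! i = sig j ! i"
  using sig_pre[of j k] by (auto simp: nth_append)

definition a0 :: "nat \<Rightarrow> bool" where "a0 i = sig (Suc i) ! i"

lemma a0_sig: "i < length (sig j) \<Longrightarrow> a0 i = sig j ! i"
proof -
  assume i: "i < length (sig j)"
  have "sig (max j (Suc i)) ! i = sig j ! i" by (rule sig_nth[OF _ i]) simp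
  moreover have "sig (max j (Suc i)) ! i = sig (Suc i) ! i"
    by (rule sig_nth) (use I1[of "Suc i"] in auto)
  ultimately show ?thesis unfolding a0_def by simp
qed

lemma a0_sp: "i < length (sp j) \<Longrightarrow> a0 i = sp j ! i"
proof -
  assume i: "i < length (sp j)"
  obtain w where w: "sig (Suc j) = sp j @ w" using sig_Suc_ex by blast
  then have "i < length (sig (Suc j))" using i by simp
  then show ?thesis using a0_sig[of i "Suc j"] w i by (simp add: nth_append)
qed

lemma sp_le_sig: "j < k \<Longrightarrow> length (sp j) \<le> length (sig k)"
proof -
  assume "j < k"
  then obtain ys where "sig k = sig (Suc j) @ ys" using sig_pre[of "Suc j" k] by auto
  moreover obtain w where "sig (Suc j) = sp j @ w" using sig_Suc_ex by blast
  ultimately show ?thesis by simp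
qed

lemma evs_pre: "j \<le> k \<Longrightarrow> \<exists>ys. evs k = evs j @ ys \<and> (\<forall>(\<tau>, q)\<in>set ys. length (sp j) \<le> q)"
proof (induction k rule: dec_induct)
  case base then show ?case by simp
next
  case (step k)
  then obtain ys where ys: "evs k = evs j @ ys" "\<forall>(\<tau>, q)\<in>set ys. length (sp j) \<le> q" by blast
  have spk: "length (sp j) \<le> length (sp k)"
  proof (cases "j = k")
    case False
    then have "length (sp j) \<le> length (sig k)" using sp_le_sig step by simp
    then show ?thesis using sp_len[of k] by simp
  qed simp
  show ?case
  proof (cases "endsT (enum k)")
    case True
    show ?thesis
      by (rule exI[of _ "ys @ [(enum k, length (sp k) + length (vv k))]"]) (use ys spk True st_Suc_T in auto)
  next
    case False then show ?thesis using ys st_Suc_F by auto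
  qed
qed

definition QQ :: "(nat \<Rightarrow> bool) \<Rightarrow> nat set" where "QQ \<alpha> = (\<Union>j. Qa (evs j) \<alpha>)"

lemma Qa_mono: "set ev \<subseteq> set ev' \<Longrightarrow> Qa ev \<alpha> \<subseteq> Qa ev' \<alpha>"
  unfolding Qa_def by blast

lemma QQ_loc:
  assumes "i < length (sp j)"
  shows "i \<in> QQ \<alpha> \<longleftrightarrow> i \<in> Qa (evs j) \<alpha>"
proof
  assume "i \<in> QQ \<alpha>"
  then obtain k where k: "i \<in> Qa (evs k) \<alpha>" unfolding QQ_def by blast
  show "i \<in> Qa (evs j) \<alpha>"
  proof (cases "k \<le> j")
    case True
    then obtain ys where "evs j = evs k @ ys" using evs_pre by blast
    then show ?thesis using k Qa_mono[of "evs k" "evs j"] by auto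
  next
    case False
    then obtain ys where ys: "evs k = evs j @ ys" "\<forall>(\<tau>, q)\<in>set ys. length (sp j) \<le> q"
      using evs_pre[of j k] by auto
    show ?thesis
    proof (cases "i = 0")
      case True then show ?thesis by (simp add: Qa_def)
    next
      case False
      then obtain \<tau> where t: "(\<tau>, i) \<in> set (evs k)" "\<forall>n<length \<tau>. \<alpha> n = \<tau>!n"
        using k unfolding Qa_def by blast
      have "(\<tau>, i) \<notin> set ys" using ys(2) assms by fastforce
      then have "(\<tau>, i) \<in> set (evs j)" using t(1) ys(1) by simp
      then show ?thesis using t(2) unfolding Qa_def by blast
    qed
  qed
next
  assume "i \<in> Qa (evs j) \<alpha>" then show "i \<in> QQ \<alpha>" unfolding QQ_def by blast
qed

definition fa :: "(nat \<Rightarrow> bool) \<Rightarrow> nat \<Rightarrow> bool" where "fa \<alpha> i = (a0 i \<noteq> (i \<in> QQ \<alpha>))"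

lemma a0_U: "a0 \<in> U j"
proof -
  have fl: "flip (sig j) {} = sig j" by (rule nth_equalityI) auto
  have all: "\<forall>Q. Q \<subseteq> {..<length (sig j)} \<longrightarrow> cyl (flip (sig j) Q @ uext j (sig j)) \<subseteq> U j"
    using uext[of j "sig j"] by (rule conjunct2)
  have "cyl (flip (sig j) {} @ uext j (sig j)) \<subseteq> U j" using all[rule_format, of "{}"] by simp
  then have c: "cyl (sp j) \<subseteq> U j" unfolding sp_def fl .
  have "a0 \<in> cyl (sp j)" unfolding cyl_def using a0_sp by simp
  then show ?thesis using c by (rule subsetD[rotated])
qed

lemma fa_U: "fa \<alpha> \<in> U j"
proof -
  define Q where "Q = Qa (evs j) \<alpha>"
  have Qb: "Q \<subseteq> {..<length (sig j)}" unfolding Q_def using Qa_bound[OF Inv_all] .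
  have all: "\<forall>Q. Q \<subseteq> {..<length (sig j)} \<longrightarrow> cyl (flip (sig j) Q @ uext j (sig j)) \<subseteq> U j"
    using uext[of j "sig j"] by (rule conjunct2)
  have "cyl (flip (sig j) Q @ uext j (sig j)) \<subseteq> U j" using all[rule_format, OF Qb] .
  moreover have "fa \<alpha> \<in> cyl (flip (sig j) Q @ uext j (sig j))"
    unfolding cyl_def
  proof (intro CollectI allI impI)
    fix i assume i: "i < length (flip (sig j) Q @ uext j (sig j))"
    then have isp: "i < length (sp j)" unfolding sp_def by simp
    have mem: "i \<in> QQ \<alpha> \<longleftrightarrow> i \<in> Q" using QQ_loc[OF isp] unfolding Q_def .
    show "fa \<alpha> i = (flip (sig j) Q @ uext j (sig j)) ! i"
    proof (cases "i < length (sig j)")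
      case True
      then show ?thesis using mem a0_sig[OF True] unfolding fa_def by (simp add: nth_append)
    next
      case False
      then have "i \<notin> Q" using Qb by auto
      then show ?thesis using mem a0_sp[OF isp] False unfolding fa_def sp_def by (simp add: nth_append)
    qed
  qed
  ultimately show ?thesis by (rule subsetD)
qed


lemma Qa_agree:
  assumes "\<forall>(\<tau>, q)\<in>set ev. length \<tau> \<le> L" "\<forall>k<L. \<alpha> k = \<beta> k"
  shows "Qa ev \<alpha> = Qa ev \<beta>"
proof -
  have "(\<forall>i<length \<tau>. \<alpha> i = \<tau>!i) \<longleftrightarrow> (\<forall>i<length \<tau>. \<beta> i = \<tau>!i)" if "(\<tau>, q) \<in> set ev" for \<tau> q
  proof -
    have "length \<tau> \<le> L" using assms(1) that by blast
    then show ?thesis using assms(2) by auto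
  qed
  then show ?thesis unfolding Qa_def by blast
qed

lemma fa_loc: "fa \<alpha> i = (a0 i \<noteq> (i \<in> Qa (evs i) \<alpha>))"
proof -
  have "i < length (sp i)" using I1[of i] sp_len[of i] by simp
  then show ?thesis unfolding fa_def using QQ_loc by simp
qed

lemma fa_cont: "continuous_map cantor cantor fa"
proof -
  have "continuous_map cantor (discrete_topology UNIV) (\<lambda>\<alpha>. fa \<alpha> i)" for i
  proof -
    define L where "L = Max (insert 0 (length ` fst ` set (evs i)))"
    have Lb: "\<forall>(\<tau>, q)\<in>set (evs i). length \<tau> \<le> L"
    proof (intro ballI, clarify)
      fix \<tau> q assume "(\<tau>, q) \<in> set (evs i)"
      then have "length \<tau> \<in> insert 0 (length ` fst ` set (evs i))" by force
      then show "length \<tau> \<le> L" unfolding L_def by (intro Max_ge) auto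
    qed
    show ?thesis
    proof (rule locconst_cont[of L])
      fix a b :: "nat \<Rightarrow> bool" assume "\<forall>k<L. a k = b k"
      then have "Qa (evs i) a = Qa (evs i) b" using Qa_agree[OF Lb] by blast
      then show "fa a i = fa b i" by (simp add: fa_loc)
    qed
  qed
  then have "continuous_map cantor (product_topology (\<lambda>_. discrete_topology UNIV) UNIV) fa"
    by (simp add: continuous_map_componentwise_UNIV)
  then show ?thesis by (simp only: cantor_def)
qed

lemma QQ_facts:
  assumes "q \<in> QQ \<alpha>"
  shows "map a0 [0..<q] = sE E q \<and> map (fa \<alpha>) [0..<q] = tE E q \<and> a0 q = False"
proof -
  obtain j where j: "q \<in> Qa (evs j) \<alpha>" using assms unfolding QQ_def by blast
  have ql: "q < length (sig j)" using Qa_bound[OF Inv_all] j by blast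
  note f = I3[OF j]
  have a: "map a0 [0..<q] = map (\<lambda>i. sig j ! i) [0..<q]" using a0_sig ql by simp
  have b: "map (fa \<alpha>) [0..<q] = map (\<lambda>i. sig j ! i \<noteq> (i \<in> Qa (evs j) \<alpha>)) [0..<q]"
  proof -
    have "fa \<alpha> i = (sig j ! i \<noteq> (i \<in> Qa (evs j) \<alpha>))" if "i < q" for i
    proof -
      have il: "i < length (sp j)" using that ql sp_len[of j] by simp
      show ?thesis unfolding fa_def using QQ_loc[OF il] a0_sig[of i j] that ql by simp
    qed
    then show ?thesis by simp
  qed
  have c: "a0 q = sig j ! q" using a0_sig ql by simp
  show ?thesis by (simp only: a b c f)
qed

lemma body_r: "(map a0 [0..<r], map (fa \<alpha>) [0..<r]) \<in> tree_of E"
  proof (cases "r = 0")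
    case True then show ?thesis by (simp add: tree_of_def)
  next
    case False
    define S where "S = QQ \<alpha> \<inter> {..<r}"
    have "0 \<in> QQ \<alpha>" unfolding QQ_def Qa_def by blast
    then have S0: "0 \<in> S" using False unfolding S_def by simp
    define q where "q = Max S"
    have fS: "finite S" unfolding S_def by simp
    have qS: "q \<in> S" unfolding q_def using fS S0 by (intro Max_in) auto
    then have qQ: "q \<in> QQ \<alpha>" and qr: "q < r" unfolding S_def by auto
    have nq: "i \<notin> QQ \<alpha>" if "q < i" "i < r" for i
    proof
      assume "i \<in> QQ \<alpha>"
      then have "i \<in> S" using that unfolding S_def by simp
      then have "i \<le> q" unfolding q_def using fS by simp
      then show False using that by simp
    qed
    note F = QQ_facts[OF qQ]
    define w where "w = map a0 [Suc q..<r]"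
    have up: "[0..<r] = [0..<q] @ q # [Suc q..<r]"
      using qr by (metis le0 le_add_diff_inverse less_imp_le upt_add_eq_append upt_conv_Cons)
    have m1: "map a0 [0..<r] = sE E q @ [False] @ w"
      using F up unfolding w_def by simp
    have "map (fa \<alpha>) [Suc q..<r] = w"
      unfolding w_def using nq by (simp add: fa_def)
    moreover have "fa \<alpha> q = True" using qQ F unfolding fa_def by simp
    ultimately have m2: "map (fa \<alpha>) [0..<r] = tE E q @ [True] @ w"
      using F up by simp
    show ?thesis using m1 m2 unfolding tree_of_def by blast
  qed

lemma body_fa: "(a0, fa \<alpha>) \<in> body (tree_of E)"
  unfolding body_def using body_r by simp

lemma ev1:
  assumes "\<alpha> k"
  shows "\<exists>q. q \<in> QQ \<alpha> \<and> 0 < q \<and> fst_phi (q - 1) = fst_phi k"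
proof -
  define \<tau> where "\<tau> = map \<alpha> [0..<Suc k]"
  obtain j where j: "enum j = \<tau>" using enum_surj by blast
  have eT: "endsT (enum j)" using j assms unfolding \<tau>_def endsT_def by simp
  define qn where "qn = length (sp j) + length (vv j)"
  have ev: "(\<tau>, qn) \<in> set (evs (Suc j))" using st_Suc_T[OF eT] j unfolding qn_def by simp
  have "\<forall>i<length \<tau>. \<alpha> i = \<tau>!i" unfolding \<tau>_def by (simp del: upt_Suc)
  then have "qn \<in> Qa (evs (Suc j)) \<alpha>" using ev unfolding Qa_def by blast
  then have "qn \<in> QQ \<alpha>" unfolding QQ_def by blast
  moreover have "0 < qn \<and> fst_phi (qn - 1) = fst_phi (length \<tau> - 1)" using I2[OF ev] by blast
  ultimately show ?thesis unfolding \<tau>_def by auto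
qed

lemma ev2:
  assumes "q \<in> QQ \<alpha>" "0 < q"
  shows "\<exists>k. \<alpha> k \<and> fst_phi (q - 1) = fst_phi k"
proof -
  obtain j where j: "q \<in> Qa (evs j) \<alpha>" using assms unfolding QQ_def by blast
  then obtain \<tau> where t: "(\<tau>, q) \<in> set (evs j)" "\<forall>i<length \<tau>. \<alpha> i = \<tau>!i"
    using assms(2) unfolding Qa_def by auto
  have I: "endsT \<tau>" "fst_phi (q - 1) = fst_phi (length \<tau> - 1)" using I2[OF t(1)] by blast+
  have ne: "\<tau> \<noteq> []" and lt: "last \<tau>" using I(1) unfolding endsT_def by auto
  have "\<alpha> (length \<tau> - 1) = \<tau> ! (length \<tau> - 1)" using t(2) ne by simp
  also have "\<dots> = last \<tau>" using ne by (simp add: last_conv_nth)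
  finally have "\<alpha> (length \<tau> - 1)" using lt by simp
  then show ?thesis using I(2) by blast
qed

lemma symdiff_fa: "symdiff a0 (fa \<alpha>) x \<longleftrightarrow> x \<in> QQ \<alpha>"
  unfolding symdiff_def fa_def by (cases "a0 x") auto

end


theorem lemma3p4:
  fixes G :: "(nat \<Rightarrow> bool) set" and E :: "(bool list \<times> bool list) set"
  assumes "gdelta_in cantor G" and "cantor closure_of G = topspace cantor"
    and "is_test E"
  shows "\<exists>\<alpha>0\<in>G. \<exists>f. continuous_map cantor cantor f \<and> (\<forall>\<alpha>. f \<alpha> \<in> G) \<and>
     (\<forall>\<alpha>. (\<alpha>0, f \<alpha>) \<in> body (tree_of E) \<and>
        (\<forall>(t::nat list) (m::nat).
           (\<alpha> (pcode (t @ [m])) \<longrightarrow>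
              (\<exists>m'. symdiff \<alpha>0 (f \<alpha>) (pcode (t @ [m']) + 1))) \<and>
           (symdiff \<alpha>0 (f \<alpha>) (pcode (t @ [m]) + 1) \<longrightarrow>
              (\<exists>m'. \<alpha> (pcode (t @ [m']))))))"
proof -
  obtain U :: "nat \<Rightarrow> (nat \<Rightarrow> bool) set" where U: "\<And>j. openin cantor (U j)" "\<And>j. G \<subseteq> U j" "(\<Inter>j. U j) \<subseteq> G"
    using gdelta_seq[OF assms(1)] by blast
  interpret c: constr E U G
    by (rule constr.intro) (fact assms(3), fact U(1), fact U(2), fact assms(2))
  have "c.a0 \<in> (\<Inter>j. U j)" using c.a0_U by simp
  then have a0G: "c.a0 \<in> G" using U(3) by (rule subsetD[rotated])
  have faG: "\<forall>\<alpha>. c.fa \<alpha> \<in> G"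
  proof
    fix \<alpha> have "c.fa \<alpha> \<in> (\<Inter>j. U j)" using c.fa_U by simp
    then show "c.fa \<alpha> \<in> G" using U(3) by (rule subsetD[rotated])
  qed
  have main: "(\<alpha> (pcode (t @ [m])) \<longrightarrow>
              (\<exists>m'. symdiff c.a0 (c.fa \<alpha>) (pcode (t @ [m']) + 1))) \<and>
           (symdiff c.a0 (c.fa \<alpha>) (pcode (t @ [m]) + 1) \<longrightarrow>
              (\<exists>m'. \<alpha> (pcode (t @ [m']))))" for \<alpha> t m
  proof (intro conjI impI)
    assume a: "\<alpha> (pcode (t @ [m]))"
    obtain q where q: "q \<in> c.QQ \<alpha>" "0 < q" "fst_phi (q - 1) = fst_phi (pcode (t @ [m]))"
      using c.ev1[of \<alpha> "pcode (t @ [m])", OF a] by blast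
    show "\<exists>m'. symdiff c.a0 (c.fa \<alpha>) (pcode (t @ [m']) + 1)"
    proof (cases "t = []")
      case True
      then have e: "pcode (t @ [q - 1]) + 1 = q" using q(2) by (simp add: pcode_snoc)
      have "symdiff c.a0 (c.fa \<alpha>) (pcode (t @ [q - 1]) + 1)" unfolding e c.symdiff_fa by (rule q(1))
      then show ?thesis by (rule exI)
    next
      case False
      have "fst_phi (q - 1) = pcode t" using q(3) False by (simp add: pcode_snoc fst_phi_npair)
      then have e: "pcode (t @ [snd (phi (q - 1))]) + 1 = q"
        using False q(2) npair_phi[of "q - 1"] by (simp add: pcode_snoc fst_phi_def)
      have "symdiff c.a0 (c.fa \<alpha>) (pcode (t @ [snd (phi (q - 1))]) + 1)" unfolding e c.symdiff_fa by (rule q(1))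
      then show ?thesis by (rule exI)
    qed
  next
    assume s: "symdiff c.a0 (c.fa \<alpha>) (pcode (t @ [m]) + 1)"
    then have x: "pcode (t @ [m]) + 1 \<in> c.QQ \<alpha>" unfolding c.symdiff_fa .
    obtain k where k: "\<alpha> k" "fst_phi (pcode (t @ [m])) = fst_phi k"
      using c.ev2[OF x] by auto
    show "\<exists>m'. \<alpha> (pcode (t @ [m']))"
    proof (cases "t = []")
      case True
      then have e: "pcode (t @ [k]) = k" by (simp add: pcode_snoc)
      have "\<alpha> (pcode (t @ [k]))" unfolding e by (rule k(1))
      then show ?thesis by (rule exI)
    next
      case False
      have "fst_phi k = pcode t" using k(2) False by (simp add: pcode_snoc fst_phi_npair)
      then have e: "pcode (t @ [snd (phi k)]) = k"
        using False npair_phi[of k] by (simp add: pcode_snoc fst_phi_def)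
      have "\<alpha> (pcode (t @ [snd (phi k)]))" unfolding e by (rule k(1))
      then show ?thesis by (rule exI)
    qed
  qed
  show ?thesis
  proof (rule bexI[OF _ a0G], rule exI[of _ c.fa], intro conjI allI)
    show "continuous_map cantor cantor c.fa" by (rule c.fa_cont)
    show "c.fa \<alpha> \<in> G" for \<alpha> using faG by blast
    show "(c.a0, c.fa \<alpha>) \<in> body (tree_of E)" for \<alpha> by (rule c.body_fa)
    show "\<alpha> (pcode (t @ [m])) \<longrightarrow>
              (\<exists>m'. symdiff c.a0 (c.fa \<alpha>) (pcode (t @ [m']) + 1))" for \<alpha> t m
      using main[of \<alpha> t m] by (rule conjunct1)
    show "symdiff c.a0 (c.fa \<alpha>) (pcode (t @ [m]) + 1) \<longrightarrow>
              (\<exists>m'. \<alpha> (pcode (t @ [m'])))" for \<alpha> t m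
      using main[of \<alpha> t m] by (rule conjunct2)
  qed
qed

end
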